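(* Let $a\in K$ and let $b_1,\dots,b_\ell\in K$ be distinct ($\ell\ge1$). Suppose that either $(a,b_i)\in S$ for all $i$, or $(b_i,a)\in S$ for all $i$. Then $\pi\ge\ell(n-2q-m+1)+q-m-1$.
   Context: $G$ is a set of size $n$ and $G(\circ)$, $G(\ast)$ are distinct groups on $G$ with the same identity element. $\mathrm{diff}(\circ,\ast)=\{(a,b):a\circ b\ne a\ast b\}$, $\mathrm{dist}(\circ,\ast)=|\mathrm{diff}(\circ,\ast)|$, $\mathrm{dist}_a=|\{b:a\circ b\ne a\ast b\}|$; $H=\{a:\mathrm{dist}_a=0\}$, $h=|H|$; $K=\{a:\mathrm{dist}_a<n/3\}$, $k=|K|$; $m=\min\{\mathrm{dist}_a:\mathrm{dist}_a>0\}$. Standing assumption: $m\ge 3$. Let $q=\lceil n/3\rceil$ and the profit $\pi=\mathrm{dist}(\circ,\ast)-((k-h)m+(n-k)q)$. Let $S=\{(a,b)\in\mathrm{diff}(\circ,\ast):a,b\in K,\ a\ne b\}$, $s=|S|$. *)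

theory Defs
  imports Complex_Main "HOL-Algebra.Group"
begin

text \<open>Two binary operations f (the paper's circ) and g (the paper's ast) on a carrier set G.\<close>

definition diff_set :: "'a set \<Rightarrow> ('a \<Rightarrow> 'a \<Rightarrow> 'a) \<Rightarrow> ('a \<Rightarrow> 'a \<Rightarrow> 'a) \<Rightarrow> ('a \<times> 'a) set" where
  "diff_set G f g = {(x, y). x \<in> G \<and> y \<in> G \<and> f x y \<noteq> g x y}"

definition dist_ops :: "'a set \<Rightarrow> ('a \<Rightarrow> 'a \<Rightarrow> 'a) \<Rightarrow> ('a \<Rightarrow> 'a \<Rightarrow> 'a) \<Rightarrow> nat" where
  "dist_ops G f g = card (diff_set G f g)"

definition dist_row :: "'a set \<Rightarrow> ('a \<Rightarrow> 'a \<Rightarrow> 'a) \<Rightarrow> ('a \<Rightarrow> 'a \<Rightarrow> 'a) \<Rightarrow> 'a \<Rightarrow> nat" where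
  "dist_row G f g x = card {y \<in> G. f x y \<noteq> g x y}"

definition H_set :: "'a set \<Rightarrow> ('a \<Rightarrow> 'a \<Rightarrow> 'a) \<Rightarrow> ('a \<Rightarrow> 'a \<Rightarrow> 'a) \<Rightarrow> 'a set" where
  "H_set G f g = {x \<in> G. dist_row G f g x = 0}"

definition K_set :: "'a set \<Rightarrow> ('a \<Rightarrow> 'a \<Rightarrow> 'a) \<Rightarrow> ('a \<Rightarrow> 'a \<Rightarrow> 'a) \<Rightarrow> 'a set" where
  "K_set G f g = {x \<in> G. real (dist_row G f g x) < real (card G) / 3}"

definition m_val :: "'a set \<Rightarrow> ('a \<Rightarrow> 'a \<Rightarrow> 'a) \<Rightarrow> ('a \<Rightarrow> 'a \<Rightarrow> 'a) \<Rightarrow> nat" where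
  "m_val G f g = Min {dist_row G f g x | x. x \<in> G \<and> dist_row G f g x > 0}"

definition q_val :: "nat \<Rightarrow> nat" where
  "q_val n = nat \<lceil>real n / 3\<rceil>"

definition profit :: "'a set \<Rightarrow> ('a \<Rightarrow> 'a \<Rightarrow> 'a) \<Rightarrow> ('a \<Rightarrow> 'a \<Rightarrow> 'a) \<Rightarrow> int" where
  "profit G f g = int (dist_ops G f g)
     - ((int (card (K_set G f g)) - int (card (H_set G f g))) * int (m_val G f g)
        + (int (card G) - int (card (K_set G f g))) * int (q_val (card G)))"

definition S_set :: "'a set \<Rightarrow> ('a \<Rightarrow> 'a \<Rightarrow> 'a) \<Rightarrow> ('a \<Rightarrow> 'a \<Rightarrow> 'a) \<Rightarrow> ('a \<times> 'a) set" where
  "S_set G f g = {(x, y) \<in> diff_set G f g. x \<in> K_set G f g \<and> y \<in> K_set G f g \<and> x \<noteq> y}"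

end

theory Submission
  imports Defs
begin

lemma grp_facts:
  assumes "group \<lparr>carrier = G, mult = f, one = e\<rparr>"
  shows "\<And>x y. x \<in> G \<Longrightarrow> y \<in> G \<Longrightarrow> f x y \<in> G"
    and "\<And>x y z. x \<in> G \<Longrightarrow> y \<in> G \<Longrightarrow> z \<in> G \<Longrightarrow> f (f x y) z = f x (f y z)"
    and "\<And>x y z. x \<in> G \<Longrightarrow> y \<in> G \<Longrightarrow> z \<in> G \<Longrightarrow> f x y = f x z \<longleftrightarrow> y = z"
    and "\<And>x y z. x \<in> G \<Longrightarrow> y \<in> G \<Longrightarrow> z \<in> G \<Longrightarrow> f y x = f z x \<longleftrightarrow> y = z"
proof -
  interpret group "\<lparr>carrier = G, mult = f, one = e\<rparr>" by fact
  show "\<And>x y. x \<in> G \<Longrightarrow> y \<in> G \<Longrightarrow> f x y \<in> G"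
    using m_closed by fastforce
  show "\<And>x y z. x \<in> G \<Longrightarrow> y \<in> G \<Longrightarrow> z \<in> G \<Longrightarrow> f (f x y) z = f x (f y z)"
    using m_assoc by fastforce
  show "\<And>x y z. x \<in> G \<Longrightarrow> y \<in> G \<Longrightarrow> z \<in> G \<Longrightarrow> f x y = f x z \<longleftrightarrow> y = z"
    using Units_l_cancel Units_eq by fastforce
  show "\<And>x y z. x \<in> G \<Longrightarrow> y \<in> G \<Longrightarrow> z \<in> G \<Longrightarrow> f y x = f z x \<longleftrightarrow> y = z"
    using right_cancel by fastforce
qed

lemma row_bound:
  assumes fin: "finite G"
    and gf: "group \<lparr>carrier = G, mult = f, one = e\<rparr>"
    and gg: "group \<lparr>carrier = G, mult = g, one = e\<rparr>"
    and a: "a \<in> G" and b: "b \<in> G" and ne: "f a b \<noteq> g a b"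
  shows "card G \<le> dist_row G f g (f a b) + dist_row G f g a + dist_row G f g b"
proof -
  note F = grp_facts[OF gf] and Gg = grp_facts[OF gg]
  define c where "c = f a b"
  have cG: "c \<in> G" using F(1) a b c_def by auto
  define Ba where "Ba = {x\<in>G. f a (f b x) \<noteq> g a (f b x)}"
  define Bb where "Bb = {x\<in>G. f b x \<noteq> g b x}"
  define Rc where "Rc = {x\<in>G. f c x \<noteq> g c x}"
  have "card Ba \<le> card {y\<in>G. f a y \<noteq> g a y}"
  proof (rule card_inj_on_le[where f="f b"])
    show "inj_on (f b) Ba" unfolding inj_on_def Ba_def using F(3) b by auto
    show "f b ` Ba \<subseteq> {y\<in>G. f a y \<noteq> g a y}" unfolding Ba_def using F(1) b by auto
  qed (use fin in auto)
  hence cBa: "card Ba \<le> dist_row G f g a" unfolding dist_row_def .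
  have "G \<subseteq> Rc \<union> Ba \<union> Bb"
  proof
    fix x assume x: "x \<in> G"
    show "x \<in> Rc \<union> Ba \<union> Bb"
    proof (rule ccontr)
      assume "x \<notin> Rc \<union> Ba \<union> Bb"
      hence 1: "f c x = g c x" "f a (f b x) = g a (f b x)" "f b x = g b x"
        using x unfolding Rc_def Ba_def Bb_def by auto
      have "g c x = g (g a b) x"
        using 1 x a b F(2) Gg(2) c_def by metis
      hence "c = g a b" using Gg(4) cG x Gg(1) a b by metis
      thus False using ne c_def by simp
    qed
  qed
  hence "card G \<le> card (Rc \<union> Ba \<union> Bb)"
    by (intro card_mono) (auto simp: Rc_def Ba_def Bb_def fin)
  also have "\<dots> \<le> card Rc + card Ba + card Bb"
    by (metis card_Un_le add_le_mono1 order_trans)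
  finally show ?thesis using cBa unfolding dist_row_def Rc_def Bb_def c_def by linarith
qed

lemma profit_sum:
  assumes fin: "finite G" and ne: "G \<noteq> {}"
  shows "profit G f g = (\<Sum>x\<in>G. (if x \<in> H_set G f g then 0
      else if x \<in> K_set G f g then int (dist_row G f g x) - int (m_val G f g)
      else int (dist_row G f g x) - int (q_val (card G))))"
proof -
  define d where "d = dist_row G f g"
  define K where "K = K_set G f g"
  define H where "H = H_set G f g"
  define m where "m = m_val G f g"
  define q where "q = q_val (card G)"
  have npos: "card G > 0" using fin ne by (simp add: card_gt_0_iff)
  have HK: "H \<subseteq> K" "K \<subseteq> G" unfolding H_def K_def H_set_def K_set_def using npos by auto
  have dH: "\<And>x. x \<in> H \<Longrightarrow> d x = 0" unfolding H_def H_set_def d_def by auto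
  have dist: "dist_ops G f g = (\<Sum>x\<in>G. d x)"
  proof -
    have "diff_set G f g = (SIGMA x:G. {y\<in>G. f x y \<noteq> g x y})"
      unfolding diff_set_def by auto
    thus ?thesis unfolding dist_ops_def d_def dist_row_def using fin by simp
  qed
  have eq: "\<And>x. x \<in> G \<Longrightarrow> (if x \<in> H then 0 else if x \<in> K then int (d x) - int m else int (d x) - int q)
     = int (d x) - ((if x \<in> K - H then int m else 0) + (if x \<in> G - K then int q else 0))"
    using dH HK by auto
  have s1: "(\<Sum>x\<in>G. (if x \<in> K - H then int m else 0)) = int (card (K - H)) * int m"
    proof -
    have "G \<inter> (K - H) = K - H" using HK by blast
    moreover have "(\<Sum>x\<in>G. (if x \<in> K - H then int m else 0)) = int m * card (G \<inter> (K - H))"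
      using fin by (simp only: sum.If_cases sum.neutral_const sum_constant) (simp add: set_diff_eq)
    ultimately show ?thesis by simp
  qed
  have s2: "(\<Sum>x\<in>G. (if x \<in> G - K then int q else 0)) = int (card (G - K)) * int q"
    proof -
    have "G \<inter> (G - K) = G - K" by blast
    moreover have "(\<Sum>x\<in>G. (if x \<in> G - K then int q else 0)) = int q * card (G \<inter> (G - K))"
      using fin by (simp only: sum.If_cases sum.neutral_const sum_constant) (simp add: set_diff_eq)
    ultimately show ?thesis by simp
  qed
  have c1: "int (card (K - H)) = int (card K) - int (card H)"
    using HK fin by (simp add: card_Diff_subset of_nat_diff card_mono finite_subset)
  have c2: "int (card (G - K)) = int (card G) - int (card K)"
    using HK fin by (simp add: card_Diff_subset of_nat_diff card_mono finite_subset)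
  have "(\<Sum>x\<in>G. (if x \<in> H then 0 else if x \<in> K then int (d x) - int m else int (d x) - int q))
     = (\<Sum>x\<in>G. int (d x)) - ((\<Sum>x\<in>G. (if x \<in> K - H then int m else 0)) + (\<Sum>x\<in>G. (if x \<in> G - K then int q else 0)))"
    using eq by (simp add: sum.distrib sum_subtractf)
  also have "\<dots> = profit G f g"
  proof -
    have p: "profit G f g = int (\<Sum>x\<in>G. d x) - ((int (card K) - int (card H)) * int m + (int (card G) - int (card K)) * int q)"
      unfolding profit_def dist K_def H_def m_def q_def by simp
    show ?thesis unfolding p s1 s2 c1 c2 by simp
  qed
  finally show ?thesis unfolding d_def K_def H_def m_def q_def by simp
qed


theorem lemma9p4:
  fixes G :: "'a set" and f g :: "'a \<Rightarrow> 'a \<Rightarrow> 'a" and e :: 'a and n :: nat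
    and a :: 'a and b :: "nat \<Rightarrow> 'a" and l :: nat
  assumes "finite G" and "card G = n"
    and "group \<lparr>carrier = G, mult = f, one = e\<rparr>"
    and "group \<lparr>carrier = G, mult = g, one = e\<rparr>"
    and "\<exists>x\<in>G. \<exists>y\<in>G. f x y \<noteq> g x y"
    and "m_val G f g \<ge> 3"
    and "a \<in> K_set G f g"
    and "l \<ge> 1"
    and "\<forall>i\<in>{1..l}. b i \<in> K_set G f g"
    and "inj_on b {1..l}"
    and "(\<forall>i\<in>{1..l}. (a, b i) \<in> S_set G f g) \<or> (\<forall>i\<in>{1..l}. (b i, a) \<in> S_set G f g)"
  shows "profit G f g \<ge> int l * (int n - 2 * int (q_val n) - int (m_val G f g) + 1)
                          + int (q_val n) - int (m_val G f g) - 1"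
  proof -
  note F = grp_facts[OF assms(3)]
  define d where "d = dist_row G f g"
  define K where "K = K_set G f g"
  define H where "H = H_set G f g"
  define m where "m = m_val G f g"
  define q where "q = q_val n"
  define w where "w = (\<lambda>x. if x \<in> H then 0 else if x \<in> K then int (d x) - int m
      else int (d x) - int q)"
  have fin: "finite G" by fact
  have aK: "a \<in> K" using assms(7) K_def by simp
  have KG: "K \<subseteq> G" unfolding K_def K_set_def by auto
  have aG: "a \<in> G" using aK KG by auto
  have HK: "H \<subseteq> K" unfolding H_def K_def H_set_def K_set_def using aG fin assms(2)
    by (auto simp: card_gt_0_iff)
  have prof: "profit G f g = (\<Sum>x\<in>G. w x)"
    using profit_sum[OF fin, of f g] aG unfolding w_def H_def K_def d_def m_def q_def assms(2) by auto
  have qr: "real q = real_of_int \<lceil>real n / 3\<rceil>"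
    unfolding q_def q_val_def by simp
  have kq: "\<And>x. x \<in> K \<Longrightarrow> int (d x) < int q"
  proof -
    fix x assume "x \<in> K"
    hence "real (d x) < real n / 3" unfolding K_def K_set_def d_def assms(2) by auto
    also have "\<dots> \<le> real q" unfolding qr by (rule le_of_int_ceiling)
    finally show "int (d x) < int q" by simp
  qed
  have nKq: "\<And>x. x \<in> G \<Longrightarrow> x \<notin> K \<Longrightarrow> int q \<le> int (d x)"
  proof -
    fix x assume "x \<in> G" "x \<notin> K"
    hence "real n / 3 \<le> real (d x)" unfolding K_def K_set_def d_def assms(2) by auto
    hence "\<lceil>real n / 3\<rceil> \<le> int (d x)" by (simp add: ceiling_le_iff)
    thus "int q \<le> int (d x)" unfolding q_def q_val_def by simp
  qed
  have mle: "\<And>x. x \<in> G \<Longrightarrow> d x > 0 \<Longrightarrow> m \<le> d x"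
  proof -
    fix x assume "x \<in> G" "d x > 0"
    moreover have "finite {dist_row G f g x |x. x \<in> G \<and> dist_row G f g x > 0}"
      using fin by simp
    ultimately show "m \<le> d x" unfolding m_def m_val_def d_def
      by (intro Min_le) auto
  qed
  have wnn: "\<And>x. x \<in> G \<Longrightarrow> w x \<ge> 0"
  proof -
    fix x assume x: "x \<in> G"
    show "w x \<ge> 0"
    proof (cases "x \<in> H")
      case False
      hence "d x > 0" using x unfolding H_def H_set_def d_def by auto
      thus ?thesis using False mle[OF x] nKq[OF x] unfolding w_def by auto
    qed (simp add: w_def)
  qed
  have wK: "\<And>x. x \<in> K \<Longrightarrow> w x \<ge> int (d x) - int m"
    unfolding w_def H_def H_set_def d_def by auto
  have wnK: "\<And>x. x \<in> G \<Longrightarrow> x \<notin> K \<Longrightarrow> w x = int (d x) - int q"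
    unfolding w_def using HK by auto
  have bK: "\<And>i. i \<in> {1..l} \<Longrightarrow> b i \<in> K" using assms(9) K_def by simp
  have bG: "\<And>i. i \<in> {1..l} \<Longrightarrow> b i \<in> G" using bK KG by auto
  obtain c where cinj: "inj_on c {1..l}"
    and cG: "\<And>i. i \<in> {1..l} \<Longrightarrow> c i \<in> G"
    and cb: "\<And>i. i \<in> {1..l} \<Longrightarrow> n \<le> d (c i) + d a + d (b i)"
    and ab: "\<And>i. i \<in> {1..l} \<Longrightarrow> a \<noteq> b i"
  proof (cases "\<forall>i\<in>{1..l}. (a, b i) \<in> S_set G f g")
    case True
    show ?thesis
    proof (rule that[of "\<lambda>i. f a (b i)"])
      show "inj_on (\<lambda>i. f a (b i)) {1..l}"
        using assms(10) F(3) aG bG unfolding inj_on_def by metis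
      show "\<And>i. i \<in> {1..l} \<Longrightarrow> f a (b i) \<in> G" using F(1) aG bG by auto
      show "\<And>i. i \<in> {1..l} \<Longrightarrow> n \<le> d (f a (b i)) + d a + d (b i)"
        using row_bound[OF fin assms(3) assms(4) aG bG] True assms(2)
        unfolding S_set_def diff_set_def d_def by auto
      show "\<And>i. i \<in> {1..l} \<Longrightarrow> a \<noteq> b i" using True unfolding S_set_def by auto
    qed
  next
    case False
    hence S2: "\<forall>i\<in>{1..l}. (b i, a) \<in> S_set G f g" using assms(11) by auto
    show ?thesis
    proof (rule that[of "\<lambda>i. f (b i) a"])
      show "inj_on (\<lambda>i. f (b i) a) {1..l}"
        using assms(10) F(4) aG bG unfolding inj_on_def by metis
      show "\<And>i. i \<in> {1..l} \<Longrightarrow> f (b i) a \<in> G" using F(1) aG bG by auto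
      show "\<And>i. i \<in> {1..l} \<Longrightarrow> n \<le> d (f (b i) a) + d a + d (b i)"
        using row_bound[OF fin assms(3) assms(4) bG aG] S2 assms(2)
        unfolding S_set_def diff_set_def d_def by fastforce
      show "\<And>i. i \<in> {1..l} \<Longrightarrow> a \<noteq> b i" using S2 unfolding S_set_def by auto
    qed
  qed
  have cK: "\<And>i. i \<in> {1..l} \<Longrightarrow> c i \<notin> K"
  proof
    fix i assume i: "i \<in> {1..l}" and ci: "c i \<in> K"
    have "real (d (c i)) < real n / 3" "real (d a) < real n / 3" "real (d (b i)) < real n / 3"
      using ci aK bK[OF i] unfolding K_def K_set_def d_def assms(2) by auto
    moreover have "real n \<le> real (d (c i)) + real (d a) + real (d (b i))"
      using cb[OF i] by linarith
    ultimately show False by linarith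
  qed
  define B where "B = b ` {1..l}"
  define C where "C = c ` {1..l}"
  have BK: "B \<subseteq> K" unfolding B_def using bK by auto
  have CG: "C \<subseteq> G" unfolding C_def using cG by auto
  have CK: "C \<inter> K = {}" unfolding C_def using cK by auto
  have finB: "finite B" "finite C" unfolding B_def C_def by auto
  have aB: "a \<notin> B" unfolding B_def using ab by blast
  have aC: "a \<notin> C" using CK aK by auto
  have BC: "B \<inter> C = {}" using BK CK by auto
  have TG: "insert a (B \<union> C) \<subseteq> G" using aG BK KG CG by auto
  have "(\<Sum>x\<in>insert a (B \<union> C). w x) \<le> (\<Sum>x\<in>G. w x)"
    by (rule sum_mono2[OF fin TG]) (use wnn in auto)
  moreover have "(\<Sum>x\<in>insert a (B \<union> C). w x) = w a + (\<Sum>x\<in>B. w x) + (\<Sum>x\<in>C. w x)"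
    using finB aB aC BC by (simp add: sum.union_disjoint)
  moreover have "(\<Sum>x\<in>B. w x) + (\<Sum>x\<in>C. w x) = (\<Sum>i\<in>{1..l}. w (b i) + w (c i))"
    unfolding B_def C_def sum.distrib
    using sum.reindex[OF assms(10), of w] sum.reindex[OF cinj, of w] by (simp only: comp_def)
  moreover have "(\<Sum>i\<in>{1..l}. w (b i) + w (c i)) \<ge> (\<Sum>i\<in>{1..l}. int n - int (d a) - int m - int q)"
  proof (rule sum_mono)
    fix i assume i: "i \<in> {1..l}"
    have "w (b i) \<ge> int (d (b i)) - int m" using wK bK i by auto
    moreover have "w (c i) = int (d (c i)) - int q" using wnK cG cK i by auto
    moreover have "int n \<le> int (d (c i)) + int (d a) + int (d (b i))" using cb[OF i] by linarith
    ultimately show "int n - int (d a) - int m - int q \<le> w (b i) + w (c i)" by linarith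
  qed
  moreover have "w a \<ge> int (d a) - int m" using wK aK by auto
  ultimately have main: "profit G f g \<ge> int (d a) - int m + int l * (int n - int (d a) - int m - int q)"
    unfolding prof by simp
  have "(int l - 1) * (int q - int (d a) - 1) \<ge> 0"
    using kq[OF aK] assms(8) by simp
  moreover have "int (d a) - int m + int l * (int n - int (d a) - int m - int q)
    - (int l * (int n - 2 * int q - int m + 1) + int q - int m - 1)
    = (int l - 1) * (int q - int (d a) - 1)"
    by (simp add: algebra_simps)
  ultimately show ?thesis using main unfolding m_def q_def by linarith
qed
end
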